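(* Let $k\ge 1$ and let $D_k=3k^2+3k+1$. Let $d=D_kq+\beta$ with integers $q\ge 1$ and $0\le \beta\le D_k-1$. Then \[ \gamma_k(T_d)\le \begin{cases} \dfrac{D_kq^2+(6k+3)q+2}{2}, & \text{if } \beta=0,\\[6pt] \dfrac{D_k(q+1)^2+(6k+3)(q+1)+2}{2}, & \text{if } \beta>0. \end{cases} \]
   Context: Let $\alpha_1=(1,0)$ and $\alpha_2=(-\tfrac12,\tfrac{\sqrt3}{2})$. The triangular lattice $T_\infty$ is the infinite graph with vertex set $\{a\alpha_1+b\alpha_2 : a,b\in\mathbb Z\}$, two vertices being adjacent iff their Euclidean distance is $1$. For an integer $d\ge 0$, the triangular matchstick graph $T_d$ is the subgraph of $T_\infty$ induced by the vertices $a\alpha_1+b\alpha_2$ with $0\le b\le a\le d$. For a connected graph $G$, a set $D\subseteq V(G)$ is a distance-$k$ dominating set if every vertex of $G$ is at (graph) distance at most $k$ from some vertex of $D$; $\gamma_k(G)$ is the minimum size of such a set. *)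

theory Defs
  imports "HOL-Analysis.Analysis"
begin

text \<open>Lattice point a*alpha1 + b*alpha2 in the plane, alpha1 = (1,0), alpha2 = (-1/2, sqrt 3/2).\<close>
definition tri_pt :: "int \<times> int \<Rightarrow> real \<times> real" where
  "tri_pt p = (real_of_int (fst p) - real_of_int (snd p) / 2,
               real_of_int (snd p) * sqrt 3 / 2)"

definition tri_adj :: "int \<times> int \<Rightarrow> int \<times> int \<Rightarrow> bool" where
  "tri_adj p q \<longleftrightarrow> dist (tri_pt p) (tri_pt q) = 1"

definition Tverts :: "nat \<Rightarrow> (int \<times> int) set" where
  "Tverts d = {(a, b). 0 \<le> b \<and> b \<le> a \<and> a \<le> int d}"

text \<open>A walk of length n in the induced subgraph on V: a list of n+1 vertices in V,
  consecutive ones adjacent.\<close>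
definition is_walk :: "(int \<times> int) set \<Rightarrow> (int \<times> int) list \<Rightarrow> bool" where
  "is_walk V ps \<longleftrightarrow> ps \<noteq> [] \<and> set ps \<subseteq> V \<and>
     (\<forall>i. Suc i < length ps \<longrightarrow> tri_adj (ps ! i) (ps ! Suc i))"

definition within_dist :: "nat \<Rightarrow> nat \<Rightarrow> int \<times> int \<Rightarrow> int \<times> int \<Rightarrow> bool" where
  "within_dist d k u v \<longleftrightarrow>
     (\<exists>ps. is_walk (Tverts d) ps \<and> hd ps = u \<and> last ps = v \<and> length ps \<le> k + 1)"

definition dist_dom_set :: "nat \<Rightarrow> nat \<Rightarrow> (int \<times> int) set \<Rightarrow> bool" where
  "dist_dom_set d k D \<longleftrightarrow> D \<subseteq> Tverts d \<and>
     (\<forall>v\<in>Tverts d. \<exists>u\<in>D. within_dist d k u v)"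

definition gamma_T :: "nat \<Rightarrow> nat \<Rightarrow> nat" where
  "gamma_T k d = (LEAST n. \<exists>D. dist_dom_set d k D \<and> card D = n)"

end

theory Submission
  imports Defs
begin

definition hdist :: "int \<times> int \<Rightarrow> int \<times> int \<Rightarrow> int" where
  "hdist u v = max (max \<bar>fst u - fst v\<bar> \<bar>snd u - snd v\<bar>) \<bar>(fst u - snd u) - (fst v - snd v)\<bar>"

lemma tri_adj_step:
  assumes "(a' - a, b' - b) \<in> {(1,0),(-1,0),(0,1),(0,-1),(1,1),(-1,-1)}"
  shows "tri_adj (a,b) (a',b')"
proof -
  have s3: "sqrt 3 * sqrt 3 = (3::real)" by simp
  have e: "dist (tri_pt (a,b)) (tri_pt (a',b')) =
     sqrt ((real_of_int (a - a') - real_of_int (b - b') / 2)^2 + (real_of_int (b - b') * sqrt 3 / 2)^2)"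
    unfolding tri_pt_def dist_Pair_Pair dist_real_def by (simp add: power2_abs power2_eq_square algebra_simps add_divide_distrib diff_divide_distrib)
  have "(real_of_int (a - a') - real_of_int (b - b') / 2)^2 + (real_of_int (b - b') * sqrt 3 / 2)^2 = 1"
    using assms by (auto simp: power2_eq_square algebra_simps s3)
  then show ?thesis unfolding tri_adj_def e by simp
qed

lemma step_exists:
  assumes "u \<in> Tverts d" "v \<in> Tverts d" "u \<noteq> v"
  shows "\<exists>w. tri_adj u w \<and> w \<in> Tverts d \<and> hdist w v + 1 = hdist u v"
proof -
  obtain a b where u: "u = (a,b)" by fastforce
  obtain a' b' where v: "v = (a',b')" by fastforce
  have T: "0 \<le> b" "b \<le> a" "a \<le> int d" "0 \<le> b'" "b' \<le> a'" "a' \<le> int d"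
    using assms(1,2) u v by (auto simp: Tverts_def)
  have ne: "a \<noteq> a' \<or> b \<noteq> b'" using assms(3) u v by auto
  consider "a' > a" "b' > b" | "a' < a" "b' < b" | "a' > a" "b' \<le> b" | "a' < a" "b' \<ge> b"
    | "a' = a" "b' > b" | "a' = a" "b' < b" using ne by linarith
  then show ?thesis
  proof cases
    case 1
    show ?thesis
      by (rule exI[of _ "(a+1,b+1)"]) (use 1 T in \<open>auto simp: u v hdist_def Tverts_def intro!: tri_adj_step\<close>)
  next
    case 2
    show ?thesis
      by (rule exI[of _ "(a-1,b-1)"]) (use 2 T in \<open>auto simp: u v hdist_def Tverts_def intro!: tri_adj_step\<close>)
  next
    case 3
    show ?thesis
      by (rule exI[of _ "(a+1,b)"]) (use 3 T in \<open>auto simp: u v hdist_def Tverts_def intro!: tri_adj_step\<close>)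
  next
    case 4
    show ?thesis
      by (rule exI[of _ "(a-1,b)"]) (use 4 T in \<open>auto simp: u v hdist_def Tverts_def intro!: tri_adj_step\<close>)
  next
    case 5
    show ?thesis
      by (rule exI[of _ "(a,b+1)"]) (use 5 T in \<open>auto simp: u v hdist_def Tverts_def intro!: tri_adj_step\<close>)
  next
    case 6
    show ?thesis
      by (rule exI[of _ "(a,b-1)"]) (use 6 T in \<open>auto simp: u v hdist_def Tverts_def intro!: tri_adj_step\<close>)
  qed
qed

lemma hdist_zero: "hdist u v \<le> 0 \<Longrightarrow> u = v"
  by (cases u; cases v) (auto simp: hdist_def prod_eq_iff)

lemma walk_exists:
  "u \<in> Tverts d \<Longrightarrow> v \<in> Tverts d \<Longrightarrow> hdist u v \<le> int n \<Longrightarrow>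
    \<exists>ps. is_walk (Tverts d) ps \<and> hd ps = u \<and> last ps = v \<and> length ps \<le> n + 1"
proof (induction n arbitrary: u)
  case 0
  then have "u = v" using hdist_zero by simp
  then show ?case using 0 by (intro exI[of _ "[u]"]) (auto simp: is_walk_def)
next
  case (Suc n)
  show ?case
  proof (cases "u = v")
    case True
    then show ?thesis using Suc by (intro exI[of _ "[u]"]) (auto simp: is_walk_def)
  next
    case False
    obtain w where w: "tri_adj u w" "w \<in> Tverts d" "hdist w v + 1 = hdist u v"
      using step_exists[OF Suc.prems(1,2) False] by blast
    have "hdist w v \<le> int n" using w(3) Suc.prems(3) by simp
    then obtain ps where ps: "is_walk (Tverts d) ps" "hd ps = w" "last ps = v" "length ps \<le> n + 1"
      using Suc.IH[OF w(2) Suc.prems(2)] by blast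
    have "is_walk (Tverts d) (u # ps)"
      unfolding is_walk_def
    proof (intro conjI allI impI)
      show "set (u # ps) \<subseteq> Tverts d" using ps(1) Suc.prems(1) by (auto simp: is_walk_def)
      fix i assume i: "Suc i < length (u # ps)"
      show "tri_adj ((u # ps) ! i) ((u # ps) ! Suc i)"
      proof (cases i)
        case 0
        then show ?thesis using w(1) ps(1,2) by (auto simp: is_walk_def hd_conv_nth)
      next
        case (Suc j)
        then show ?thesis using ps(1) i by (auto simp: is_walk_def)
      qed
    qed simp
    then show ?thesis using ps by (intro exI[of _ "u # ps"]) (auto simp: is_walk_def)
  qed
qed


definition proj :: "int \<Rightarrow> int \<times> int \<Rightarrow> int \<times> int" where
  "proj d p = (let a = fst p; b = snd p in
     if a \<le> 0 then (0,0) else if b < 0 then (min a d, 0)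
     else if a < b then (min a d, min a d) else if a > d then (d, min b d) else (a,b))"

lemma proj_in: "d \<ge> 0 \<Longrightarrow> proj (int d) p \<in> Tverts d"
  by (cases p) (auto simp: proj_def Tverts_def Let_def)

lemma proj_close:
  assumes "v \<in> Tverts d"
  shows "hdist (proj (int d) p) v \<le> hdist p v"
proof -
  obtain a b where p: "p = (a,b)" by fastforce
  obtain x y where v: "v = (x,y)" by fastforce
  have T: "0 \<le> y" "y \<le> x" "x \<le> int d" using assms v by (auto simp: Tverts_def)
  show ?thesis unfolding p v proj_def hdist_def Let_def using T
    by (simp split: if_splits add: abs_if max_def min_def) 
qed

definition psi :: "nat \<Rightarrow> int \<times> int \<Rightarrow> int" where
  "psi k p = ((3*int k+2) * snd p - (3*int k+1) * fst p) mod (3*int k^2+3*int k+1)"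

definition hn :: "int \<Rightarrow> int \<Rightarrow> int" where
  "hn a b = max (max \<bar>a\<bar> \<bar>b\<bar>) \<bar>a - b\<bar>"

lemma descent:
  fixes k :: int and a b :: int
  assumes "k \<ge> 1" "hn a b > k"
  shows "\<exists>g \<in> {(k+1,2*k+1),(2*k+1,k),(-k,k+1),(-k-1,-2*k-1),(-2*k-1,-k),(k,-k-1)}.
     hn (a - fst g) (b - snd g) < hn a b"
proof -
  have nz: "\<not> (a = 0 \<and> b = 0)" using assms unfolding hn_def by auto
  consider "a > 0" "b > 0" "a \<le> b" | "a > 0" "b \<ge> 0" "a > b" | "a \<ge> 0" "b < 0"
    | "a < 0" "b < 0" "a \<ge> b" | "a < 0" "b \<le> 0" "a < b" | "a \<le> 0" "b > 0" using nz by linarith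
  then show ?thesis
  proof cases
    case 1
    have "hn (a - (k+1)) (b - (2*k+1)) < hn a b" using 1 assms unfolding hn_def by (auto simp: abs_if max_def split: if_splits)
    then show ?thesis by force
  next
    case 2
    have "hn (a - (2*k+1)) (b - k) < hn a b" using 2 assms unfolding hn_def by (auto simp: abs_if max_def split: if_splits)
    then show ?thesis by force
  next
    case 3
    have "hn (a - k) (b - (-k-1)) < hn a b" using 3 assms unfolding hn_def by (auto simp: abs_if max_def split: if_splits)
    then show ?thesis by force
  next
    case 4
    have "hn (a - (-k-1)) (b - (-2*k-1)) < hn a b" using 4 assms unfolding hn_def by (auto simp: abs_if max_def split: if_splits)
    then show ?thesis by force
  next
    case 5
    have "hn (a - (-2*k-1)) (b - (-k)) < hn a b" using 5 assms unfolding hn_def by (auto simp: abs_if max_def split: if_splits)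
    then show ?thesis by force
  next
    case 6
    have "hn (a - (-k)) (b - (k+1)) < hn a b" using 6 assms unfolding hn_def by (auto simp: abs_if max_def split: if_splits)
    then show ?thesis by force
  qed
qed


lemma hdist_hn: "hdist u v = hn (fst v - fst u) (snd v - snd u)"
  unfolding hdist_def hn_def by (simp add: abs_minus_commute algebra_simps)

lemma psi_shift:
  assumes "(3*int k+2) * gb - (3*int k+1) * ga = m * (3*int k^2+3*int k+1)"
  shows "psi k (a + ga, b + gb) = psi k (a, b)"
proof -
  have "(3*int k+2) * (b+gb) - (3*int k+1) * (a+ga) = ((3*int k+2) * b - (3*int k+1) * a) + m * (3*int k^2+3*int k+1)"
    using assms by (simp add: algebra_simps)
  then show ?thesis unfolding psi_def by simp
qed

lemma cover:
  assumes "k \<ge> 1"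
  shows "\<exists>c. psi k c = t mod (3*int k^2+3*int k+1) \<and> hdist c p \<le> int k"
proof -
  define DD where "DD = 3*int k^2+3*int k+1"
  define P where "P = (\<lambda>n. \<exists>c. psi k c = t mod DD \<and> nat (hdist c p) = n)"
  have "psi k (t,t) = t mod DD" unfolding psi_def DD_def by (simp add: algebra_simps)
  then have "P (nat (hdist (t,t) p))" unfolding P_def by blast
  then have "P (LEAST n. P n)" by (rule LeastI)
  then obtain c where c: "psi k c = t mod DD" "nat (hdist c p) = (LEAST n. P n)" unfolding P_def by blast
  show ?thesis
  proof (rule ccontr)
    assume "\<not> ?thesis"
    then have big: "hdist c p > int k" using c(1) unfolding DD_def by (metis not_le)
    obtain a b where cab: "c = (a,b)" by fastforce
    obtain x y where pxy: "p = (x,y)" by fastforce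
    have "hn (x - a) (y - b) > int k" using big unfolding hdist_hn cab pxy by simp
    then have "\<exists>g\<in>{(int k+1,2*int k+1),(2*int k+1,int k),(-int k,int k+1),(-int k-1,-2*int k-1),(-2*int k-1,-int k),(int k,-int k-1)}. hn (x - a - fst g) (y - b - snd g) < hn (x - a) (y - b)"
      by (intro descent) (use assms in auto)
    then obtain g where g: "g \<in> {(int k+1,2*int k+1),(2*int k+1,int k),(-int k,int k+1),(-int k-1,-2*int k-1),(-2*int k-1,-int k),(int k,-int k-1)}"
      "hn (x - a - fst g) (y - b - snd g) < hn (x - a) (y - b)"
      by blast
    have mem: "(3*int k+2) * snd g - (3*int k+1) * fst g \<in> {DD, -DD, 2*DD, -2*DD}"
      using g(1) unfolding DD_def by (auto simp: algebra_simps power2_eq_square)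
    have dv: "DD dvd ((3*int k+2) * snd g - (3*int k+1) * fst g)"
      using mem by auto
    have ps: "psi k (a + fst g, b + snd g) = psi k (a,b)"
      by (rule psi_shift[where m="((3*int k+2) * snd g - (3*int k+1) * fst g) div DD"])
         (use dv in \<open>simp add: DD_def\<close>)
    have hd2: "hdist (a + fst g, b + snd g) p = hn (x - a - fst g) (y - b - snd g)"
      unfolding hdist_hn pxy by (simp add: algebra_simps)
    have "P (nat (hdist (a + fst g, b + snd g) p))"
      unfolding P_def using ps c(1) cab by auto
    then have "(LEAST n. P n) \<le> nat (hdist (a + fst g, b + snd g) p)" by (rule Least_le)
    moreover have "nat (hdist (a + fst g, b + snd g) p) < nat (hdist c p)"
      using hd2 g(2) big unfolding cab pxy hdist_hn by simp
    ultimately show False using c(2) by simp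
  qed
qed


lemma Tverts_finite: "finite (Tverts n)"
proof -
  have "Tverts n \<subseteq> {0..int n} \<times> {0..int n}" by (auto simp: Tverts_def)
  then show ?thesis by (rule finite_subset) simp
qed

lemma card_Tverts: "2 * card (Tverts n) = (n+1)*(n+2)"
proof (induction n)
  case 0
  have "Tverts 0 = {(0,0)}" by (auto simp: Tverts_def)
  then show ?case by simp
next
  case (Suc n)
  have eq: "Tverts (Suc n) = Tverts n \<union> (\<lambda>b. (int (Suc n), b)) ` {0..int (Suc n)}"
    by (auto simp: Tverts_def)
  have disj: "Tverts n \<inter> (\<lambda>b. (int (Suc n), b)) ` {0..int (Suc n)} = {}"
    by (auto simp: Tverts_def)
  have ci: "card ((\<lambda>b. (int (Suc n), b)) ` {0..int (Suc n)}) = n + 2"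
    by (subst card_image) (auto simp: inj_on_def)
  have "card (Tverts (Suc n)) = card (Tverts n) + (n + 2)"
    unfolding eq by (subst card_Un_disjoint) (use disj ci Tverts_finite in auto)
  then show ?case using Suc by simp
qed

definition Rset :: "nat \<Rightarrow> nat \<Rightarrow> (int \<times> int) set" where
  "Rset d k = {(a,b). - int k \<le> b \<and> - int k \<le> a - b \<and> a \<le> int d + int k}"

lemma Rset_sub: "Rset d k \<subseteq> (\<lambda>(a,b). (a - 2 * int k, b - int k)) ` Tverts (d + 3*k)"
proof
  fix p assume "p \<in> Rset d k"
  then obtain a b where p: "p = (a,b)" "- int k \<le> b" "- int k \<le> a - b" "a \<le> int d + int k"
    by (auto simp: Rset_def)
  have "(a + 2*int k, b + int k) \<in> Tverts (d + 3*k)" using p by (auto simp: Tverts_def)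
  then show "p \<in> (\<lambda>(a,b). (a - 2 * int k, b - int k)) ` Tverts (d + 3*k)"
    using p(1) by (auto intro!: image_eqI[of _ _ "(a + 2*int k, b + int k)"])
qed

lemma Rset_finite: "finite (Rset d k)"
  using Rset_sub by (rule finite_subset) (simp add: Tverts_finite)

lemma Rset_card: "2 * card (Rset d k) \<le> (d + 3*k + 1) * (d + 3*k + 2)"
proof -
  have "card (Rset d k) \<le> card ((\<lambda>(a,b). (a - 2 * int k, b - int k)) ` Tverts (d + 3*k))"
    using Rset_sub by (rule card_mono[rotated]) (simp add: Tverts_finite)
  also have "\<dots> \<le> card (Tverts (d + 3*k))" by (rule card_image_le) (simp add: Tverts_finite)
  finally show ?thesis using card_Tverts[of "d + 3*k"] by simp
qed

lemma pigeon:
  assumes "finite R" "finite I" "I \<noteq> {}" "\<And>x. x \<in> R \<Longrightarrow> f x \<in> I"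
  shows "\<exists>i\<in>I. card I * card {x\<in>R. f x = i} \<le> card R"
proof (rule ccontr)
  assume "\<not> ?thesis"
  then have lt: "\<And>i. i \<in> I \<Longrightarrow> card R < card I * card {x\<in>R. f x = i}" by (simp add: not_le)
  have "R = (\<Union>i\<in>I. {x\<in>R. f x = i})" using assms(4) by auto
  then have "card R = card (\<Union>i\<in>I. {x\<in>R. f x = i})" by simp
  also have "\<dots> = (\<Sum>i\<in>I. card {x\<in>R. f x = i})"
    by (rule card_UN_disjoint) (use assms(1,2) in auto)
  finally have "card R = (\<Sum>i\<in>I. card {x\<in>R. f x = i})" .
  then have "card I * card R = (\<Sum>i\<in>I. card I * card {x\<in>R. f x = i})"
    by (simp add: sum_distrib_left)
  also have "\<dots> > (\<Sum>i\<in>I. card R)"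
    by (rule sum_strict_mono) (use assms lt in auto)
  finally show False by simp
qed


lemma main_bound:
  fixes k Q d :: nat
  assumes k: "k \<ge> 1" and dQ: "d \<le> (3*k^2+3*k+1) * Q"
  shows "2 * gamma_T k d \<le> (3*k^2+3*k+1) * Q^2 + (6*k+3) * Q + 2"
proof -
  define Dk where "Dk = 3*k^2+3*k+1"
  define DD :: int where "DD = 3*int k^2+3*int k+1"
  have DDk: "DD = int Dk" unfolding DD_def Dk_def by simp
  have DDpos: "DD > 0" unfolding DD_def by simp
  define R where "R = Rset d k"
  define I where "I = {0..<DD}"
  have "\<exists>i\<in>I. card I * card {x\<in>R. psi k x = i} \<le> card R"
  proof (rule pigeon)
    fix x show "psi k x \<in> I" unfolding I_def psi_def DD_def[symmetric] using DDpos by simp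
  qed (use DDpos in \<open>auto simp: R_def Rset_finite I_def\<close>)
  then obtain t where t: "t \<in> I" "card I * card {x\<in>R. psi k x = t} \<le> card R" by blast
  have cI: "card I = Dk" unfolding I_def DDk by simp
  define S where "S = {x\<in>R. psi k x = t}"
  define DS where "DS = proj (int d) ` S"
  have dom: "dist_dom_set d k DS"
    unfolding dist_dom_set_def
  proof (intro conjI ballI)
    show "DS \<subseteq> Tverts d" unfolding DS_def using proj_in by auto
    fix v assume v: "v \<in> Tverts d"
    obtain c where c: "psi k c = t mod DD" "hdist c v \<le> int k"
      using cover[OF k, of t v] unfolding DD_def by blast
    have tm: "t mod DD = t" using t(1) unfolding I_def by simp
    have "c \<in> R" using c(2) v unfolding R_def Rset_def Tverts_def hdist_def
      by (cases c) (auto simp: abs_le_iff)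
    then have "proj (int d) c \<in> DS" using c(1) tm unfolding DS_def S_def by auto
    moreover have "hdist (proj (int d) c) v \<le> int k" using proj_close[OF v, of c] c(2) by simp
    ultimately show "\<exists>u\<in>DS. within_dist d k u v"
      using walk_exists[OF proj_in v] unfolding within_dist_def by blast
  qed
  have finS: "finite S" unfolding S_def R_def using Rset_finite by simp
  have "gamma_T k d \<le> card DS"
    unfolding gamma_T_def by (rule Least_le) (use dom in blast)
  also have "\<dots> \<le> card S" unfolding DS_def by (rule card_image_le[OF finS])
  finally have g: "gamma_T k d \<le> card S" .
  have "2 * (Dk * card S) \<le> 2 * card R" using t(2) cI unfolding S_def by simp
  also have "\<dots> \<le> (d + 3*k + 1) * (d + 3*k + 2)" unfolding R_def by (rule Rset_card)
  also have "\<dots> \<le> (Dk*Q + 3*k + 1) * (Dk*Q + 3*k + 2)"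
    using dQ unfolding Dk_def by (intro mult_mono) auto
  finally have A: "2 * (Dk * card S) \<le> (Dk*Q + 3*k + 1) * (Dk*Q + 3*k + 2)" .
  have idn: "(Dk*Q + 3*k + 1) * (Dk*Q + 3*k + 2) + 1 = Dk * (Dk * Q^2 + (6*k+3) * Q + 3)"
    unfolding Dk_def by (simp add: algebra_simps power2_eq_square)
  have e2: "Dk * (2 * card S) = 2 * (Dk * card S)" by (simp add: algebra_simps)
  have "Dk * (2 * card S) < Dk * (Dk * Q^2 + (6*k+3) * Q + 3)"
    using A idn e2 by linarith
  then have "2 * card S < Dk * Q^2 + (6*k+3) * Q + 3" by (rule mult_less_cancel1[THEN iffD1, THEN conjunct2])
  then show ?thesis using g unfolding Dk_def by simp
qed

theorem theorem1:
  fixes k q \<beta> :: nat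
  assumes "k \<ge> 1" and "q \<ge> 1"
    and "\<beta> \<le> (3*k^2 + 3*k + 1) - 1"
  shows "real (gamma_T k ((3*k^2 + 3*k + 1) * q + \<beta>)) \<le>
    (if \<beta> = 0
     then (real (3*k^2 + 3*k + 1) * real q ^ 2 + real (6*k + 3) * real q + 2) / 2
     else (real (3*k^2 + 3*k + 1) * real (q + 1) ^ 2 + real (6*k + 3) * real (q + 1) + 2) / 2)"
proof (cases "\<beta> = 0")
  case True
  have "2 * gamma_T k ((3*k^2 + 3*k + 1) * q + \<beta>) \<le> (3*k^2+3*k+1) * q^2 + (6*k+3) * q + 2"
    by (rule main_bound) (use assms True in auto)
  then have "real (2 * gamma_T k ((3*k^2 + 3*k + 1) * q + \<beta>)) \<le> real ((3*k^2+3*k+1) * q^2 + (6*k+3) * q + 2)"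
    by (rule of_nat_mono)
  then show ?thesis using True by (simp add: algebra_simps)
next
  case False
  have "(3*k^2 + 3*k + 1) * q + \<beta> \<le> (3*k^2 + 3*k + 1) * (q + 1)" using assms(3) by simp
  then have "2 * gamma_T k ((3*k^2 + 3*k + 1) * q + \<beta>) \<le> (3*k^2+3*k+1) * (q+1)^2 + (6*k+3) * (q+1) + 2"
    by (rule main_bound[OF assms(1)])
  then have "real (2 * gamma_T k ((3*k^2 + 3*k + 1) * q + \<beta>)) \<le> real ((3*k^2+3*k+1) * (q+1)^2 + (6*k+3) * (q+1) + 2)"
    by (rule of_nat_mono)
  then show ?thesis using False by (simp add: algebra_simps)
qed

end
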